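(* For each integral geometric Apollonian super-packing there is a Euclidean motion of the plane that maps it to a strongly integral geometric Apollonian super-packing.
   Context: Circles are taken in $\hat{\mathbb C}=\mathbb R^2\cup\{\infty\}$; lines count as circles. A Descartes configuration is a set of four mutually tangent circles with disjoint interiors; an ordered, oriented one carries an ordering and a total orientation, with signed curvatures (reciprocal radius, negative when the interior is unbounded, $0$ for lines, all reversed for negative orientation). Its curvature-center coordinate matrix $M_{\mathcal D}$ is the $4\times3$ matrix with $i$-th row $(b_i,b_ix_i,b_iy_i)$, $b_i$ the signed curvature and $(x_i,y_i)$ the center of the $i$-th circle (for a line: $(0,n_x,n_y)$, $n$ the unit normal pointing into the line's interior half-plane). Let $S_i$ be the $4\times4$ matrix equal to the identity except that row $i$ has $-1$ in position $i$ and $2$ elsewhere, $S_i^\perp=S_i^T$, and $\mathcal A^S=\langle S_i,S_i^\perp\rangle$ the super-Apollonian group, acting on ordered oriented Descartes configurations by left multiplication on their augmented curvature-center coordinates. The geometric super-packing generated by $\mathcal D$ is the set of all circles of configurations in the orbit $\mathcal A^S[\mathcal D]$. It is integral if some (equivalently every) configuration in the orbit has all curvatures integers, and strongly integral if some (equivalently every) configuration in the orbit has $M_{\mathcal D}$ an integer matrix. *)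

theory Defs
  imports "HOL-Analysis.Analysis"
begin

text \<open>An oriented circle is a circle (or line) of the extended plane together with a choice
  of interior side.  OHalf n d: the line n.p = d (n a unit vector), interior the
  open half-plane n.p > d, so n is the unit normal pointing into the interior (curvature 0).
  The point at infinity is left implicit: it lies on exactly the lines.\<close>

datatype ocircle = ODisk "real^2" real | OCoDisk "real^2" real | OHalf "real^2" real

fun ocircle_wf :: "ocircle \<Rightarrow> bool" where
  "ocircle_wf (ODisk c r) = (r > 0)"
| "ocircle_wf (OCoDisk c r) = (r > 0)"
| "ocircle_wf (OHalf n d) = (norm n = 1)"

fun circ_set :: "ocircle \<Rightarrow> (real^2) set" where
  "circ_set (ODisk c r) = sphere c r"
| "circ_set (OCoDisk c r) = sphere c r"
| "circ_set (OHalf n d) = {p. n \<bullet> p = d}"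

fun is_line :: "ocircle \<Rightarrow> bool" where
  "is_line (OHalf n d) = True"
| "is_line _ = False"

fun ointerior :: "ocircle \<Rightarrow> (real^2) set" where
  "ointerior (ODisk c r) = ball c r"
| "ointerior (OCoDisk c r) = - cball c r"
| "ointerior (OHalf n d) = {p. n \<bullet> p > d}"

fun oflip :: "ocircle \<Rightarrow> ocircle" where
  "oflip (ODisk c r) = OCoDisk c r"
| "oflip (OCoDisk c r) = ODisk c r"
| "oflip (OHalf n d) = OHalf (- n) (- d)"

text \<open>Tangency in the extended plane: the two circles meet in exactly one point of
  the extended plane (two lines always meet at infinity, so two lines are tangent iff they
  are parallel and distinct).\<close>
definition tangent :: "ocircle \<Rightarrow> ocircle \<Rightarrow> bool" where
  "tangent C1 C2 \<longleftrightarrow>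
     (if is_line C1 \<and> is_line C2 then circ_set C1 \<inter> circ_set C2 = {}
      else (\<exists>!p. p \<in> circ_set C1 \<inter> circ_set C2))"

fun curv :: "ocircle \<Rightarrow> real" where
  "curv (ODisk c r) = 1 / r"
| "curv (OCoDisk c r) = - 1 / r"
| "curv (OHalf n d) = 0"

text \<open>Signed curvature of the oriented circle obtained by inversion in the unit circle.\<close>
fun curv_bar :: "ocircle \<Rightarrow> real" where
  "curv_bar (ODisk c r) = ((norm c)^2 - r^2) / r"
| "curv_bar (OCoDisk c r) = (r^2 - (norm c)^2) / r"
| "curv_bar (OHalf n d) = 2 * d"

fun cc_row :: "ocircle \<Rightarrow> real^3" where
  "cc_row (ODisk c r) = vector [1 / r, c$1 / r, c$2 / r]"
| "cc_row (OCoDisk c r) = vector [- 1 / r, - c$1 / r, - c$2 / r]"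
| "cc_row (OHalf n d) = vector [0, n$1, n$2]"

definition aug_row :: "ocircle \<Rightarrow> real^4" where
  "aug_row C = vector [curv_bar C, cc_row C $ 1, cc_row C $ 2, cc_row C $ 3]"

text \<open>Four mutually tangent oriented circles, with total orientation: either all interiors
  are pairwise disjoint (positive orientation), or the configuration is the total reversal
  of one with pairwise disjoint interiors (negative orientation).\<close>
definition oriented_descartes :: "ocircle^4 \<Rightarrow> bool" where
  "oriented_descartes D \<longleftrightarrow>
     (\<forall>i. ocircle_wf (D$i)) \<and>
     (\<forall>i j. i \<noteq> j \<longrightarrow> tangent (D$i) (D$j)) \<and>
     ((\<forall>i j. i \<noteq> j \<longrightarrow> ointerior (D$i) \<inter> ointerior (D$j) = {}) \<or>
      (\<forall>i j. i \<noteq> j \<longrightarrow> ointerior (oflip (D$i)) \<inter> ointerior (oflip (D$j)) = {}))"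

definition M_coord :: "ocircle^4 \<Rightarrow> real^3^4" where
  "M_coord D = (\<chi> i. cc_row (D$i))"

definition W_coord :: "ocircle^4 \<Rightarrow> real^4^4" where
  "W_coord D = (\<chi> i. aug_row (D$i))"

definition S_gen :: "4 \<Rightarrow> real^4^4" where
  "S_gen i = (\<chi> j k. if j = i then (if k = i then -1 else 2) else (if k = j then 1 else 0))"

inductive_set superApollonian :: "(real^4^4) set" where
  id: "mat 1 \<in> superApollonian"
| S: "g \<in> superApollonian \<Longrightarrow> S_gen i ** g \<in> superApollonian"
| S_perp: "g \<in> superApollonian \<Longrightarrow> transpose (S_gen i) ** g \<in> superApollonian"
| S_inv: "g \<in> superApollonian \<Longrightarrow> matrix_inv (S_gen i) ** g \<in> superApollonian"
| S_perp_inv: "g \<in> superApollonian \<Longrightarrow> matrix_inv (transpose (S_gen i)) ** g \<in> superApollonian"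

definition sA_orbit :: "ocircle^4 \<Rightarrow> (ocircle^4) set" where
  "sA_orbit D = {D'. oriented_descartes D' \<and> (\<exists>g\<in>superApollonian. W_coord D' = g ** W_coord D)}"

definition super_packing :: "ocircle^4 \<Rightarrow> (real^2) set set" where
  "super_packing D = {circ_set (D'$i) | D' i. D' \<in> sA_orbit D}"

definition integral_super_packing :: "ocircle^4 \<Rightarrow> bool" where
  "integral_super_packing D \<longleftrightarrow> (\<exists>D'\<in>sA_orbit D. \<forall>i. curv (D'$i) \<in> \<int>)"

definition strongly_integral_super_packing :: "ocircle^4 \<Rightarrow> bool" where
  "strongly_integral_super_packing D \<longleftrightarrow> (\<exists>D'\<in>sA_orbit D. \<forall>i j. M_coord D' $ i $ j \<in> \<int>)"

definition euclidean_motion :: "(real^2 \<Rightarrow> real^2) \<Rightarrow> bool" where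
  "euclidean_motion f \<longleftrightarrow> (\<forall>x y. dist (f x) (f y) = dist x y)"

end

theory Submission
  imports Defs
begin

lemma vector_4 [simp]:
 "(vector [x,y,z,w] ::('a::zero)^4)$1 = x"
 "(vector [x,y,z,w] ::('a::zero)^4)$2 = y"
 "(vector [x,y,z,w] ::('a::zero)^4)$3 = z"
 "(vector [x,y,z,w] ::('a::zero)^4)$4 = w"
  unfolding vector_def by simp_all

definition Bf :: "real^4 \<Rightarrow> real^4 \<Rightarrow> real" where
  "Bf x y = x$3*y$3 + x$4*y$4 - (x$1*y$2 + x$2*y$1)/2"

lemma norm2_2: "(norm (x::real^2))^2 = (x$1)^2 + (x$2)^2"
  by (simp only: power2_norm_eq_inner) (simp add: inner_vec_def sum_2 power2_eq_square)

lemma inner_2: "inner (x::real^2) y = x$1*y$1 + x$2*y$2"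
  by (simp add: inner_vec_def sum_2)

lemma dist2_2: "(dist (x::real^2) y)^2 = (x$1-y$1)^2 + (x$2-y$2)^2"
  by (simp add: dist_norm norm2_2)

lemma aug_simps:
  "aug_row C $ 1 = curv_bar C" "aug_row C $ 2 = cc_row C $ 1"
  "aug_row C $ 3 = cc_row C $ 2" "aug_row C $ 4 = cc_row C $ 3"
  by (simp_all add: aug_row_def)

lemma Bf_diag: "ocircle_wf C \<Longrightarrow> Bf (aug_row C) (aug_row C) = 1"
proof (cases C)
  case (ODisk c r)
  assume "ocircle_wf C"
  then have r: "r > 0" using ODisk by simp
  show ?thesis using r unfolding ODisk Bf_def
    by (simp add: aug_simps norm2_2) (simp add: field_simps power2_eq_square)
next
  case (OCoDisk c r)
  assume "ocircle_wf C"
  then have r: "r > 0" using OCoDisk by simp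
  show ?thesis using r unfolding OCoDisk Bf_def
    by (simp add: aug_simps norm2_2) (simp add: field_simps power2_eq_square)
next
  case (OHalf n d)
  assume "ocircle_wf C"
  then have "norm n = 1" using OHalf by simp
  then have "n$1*n$1 + n$2*n$2 = 1" using norm2_2[of n] by (simp add: power2_eq_square)
  then show ?thesis unfolding OHalf Bf_def
    by (simp add: aug_simps)
qed

lemma Bf_sym: "Bf x y = Bf y x" by (simp add: Bf_def algebra_simps)
lemma Bf_neg: "Bf (-x) (-y) = Bf x y" by (simp add: Bf_def)
lemma aug_oflip: "aug_row (oflip C) = - aug_row C"
  by (cases C) (simp_all add: vec_eq_iff forall_4 aug_simps diff_divide_distrib)

lemma L_dd:
  fixes c1 c2 p :: "real^2"
  assumes r1: "r1 > 0" and r2: "r2 > 0" and disj: "ball c1 r1 \<inter> ball c2 r2 = {}"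
    and p1: "dist c1 p = r1" and p2: "dist c2 p = r2"
  shows "dist c1 c2 = r1 + r2"
proof -
  have le: "dist c1 c2 \<le> r1 + r2" using dist_triangle[of c1 c2 p] p1 p2 by (simp add: dist_commute)
  have "\<not> dist c1 c2 < r1 + r2"
  proof
    assume lt: "dist c1 c2 < r1 + r2"
    define q where "q = c1 + (r1/(r1+r2)) *\<^sub>R (c2 - c1)"
    have "dist c1 q = (r1/(r1+r2)) * dist c1 c2"
      using r1 r2 by (simp add: q_def dist_norm norm_minus_commute)
    also have "\<dots> < r1" using mult_strict_left_mono[OF lt, of "r1/(r1+r2)"] r1 r2 by simp
    finally have q1: "q \<in> ball c1 r1" by simp
    have "c2 - q = (1 - r1/(r1+r2)) *\<^sub>R (c2 - c1)"
      by (simp add: q_def algebra_simps)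
    also have "1 - r1/(r1+r2) = r2/(r1+r2)" using r1 r2 by (simp add: field_simps)
    finally have "c2 - q = (r2/(r1+r2)) *\<^sub>R (c2 - c1)" .
    then have "dist c2 q = (r2/(r1+r2)) * dist c1 c2"
      using r1 r2 by (simp add: dist_norm norm_minus_commute)
    also have "\<dots> < r2" using mult_strict_left_mono[OF lt, of "r2/(r1+r2)"] r1 r2 by simp
    finally have q2: "q \<in> ball c2 r2" by simp
    show False using q1 q2 disj by blast
  qed
  then show ?thesis using le by simp
qed

lemma L_dc:
  fixes c1 c2 p :: "real^2"
  assumes r1: "r1 > 0" and disj: "ball c1 r1 \<inter> - cball c2 r2 = {}"
    and p1: "dist c1 p = r1" and p2: "dist c2 p = r2"
  shows "dist c1 c2 = r2 - r1"
proof -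
  have "ball c1 r1 \<subseteq> cball c2 r2" using disj by blast
  then have a: "dist c1 c2 + r1 \<le> r2" using r1 by (simp add: ball_subset_cball_iff)
  have "r2 \<le> dist c2 c1 + dist c1 p" using dist_triangle[of c2 p c1] p2 by simp
  then show ?thesis using a p1 by (simp add: dist_commute)
qed

lemma L_cc:
  fixes c1 c2 :: "real^2"
  shows "- cball c1 r1 \<inter> - cball c2 r2 \<noteq> {}"
proof
  assume "- cball c1 r1 \<inter> - cball c2 r2 = {}"
  then have "cball c1 r1 \<union> cball c2 r2 = UNIV" by blast
  moreover have "bounded (cball c1 r1 \<union> cball c2 r2)" by simp
  ultimately show False using not_bounded_UNIV by metis
qed

lemma L_dh:
  fixes c n p :: "real^2"
  assumes r: "r > 0" and n: "norm n = 1" and disj: "ball c r \<inter> {p. inner n p > d} = {}"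
    and p1: "dist c p = r" and p2: "inner n p = d"
  shows "inner n c + r = d"
proof -
  have "inner n (p - c) \<le> norm n * norm (p - c)" by (rule norm_cauchy_schwarz)
  then have a: "d \<le> inner n c + r" using n p1 p2 by (simp add: inner_diff_right dist_norm norm_minus_commute)
  have "\<not> inner n c + r > d"
  proof
    assume lt: "inner n c + r > d"
    define s where "s = (max (d - inner n c) 0 + r)/2"
    have s0: "s \<ge> 0" "s < r" using r lt by (auto simp: s_def)
    define q where "q = c + s *\<^sub>R n"
    have "dist c q = s" using s0 n by (simp add: q_def dist_norm)
    then have qb: "q \<in> ball c r" using s0 by simp
    have "inner n n = 1" using n by (simp add: norm_eq_sqrt_inner)
    then have "inner n q = inner n c + s" by (simp add: q_def inner_add_right)
    moreover have "s > d - inner n c" using lt r by (auto simp: s_def max_def)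
    ultimately have "inner n q > d" by linarith
    then show False using disj qb by blast
  qed
  then show ?thesis using a by simp
qed

lemma L_ch:
  fixes c n :: "real^2"
  assumes n: "norm n = 1"
  shows "- cball c r \<inter> {p. inner n p > d} \<noteq> {}"
proof -
  define q where "q = (\<bar>d\<bar> + norm c + \<bar>r\<bar> + 1) *\<^sub>R n"
  have nn: "inner n n = 1" using n by (simp add: norm_eq_sqrt_inner)
  have "inner n q = \<bar>d\<bar> + norm c + \<bar>r\<bar> + 1" using nn by (simp add: q_def)
  then have i: "inner n q > d" by (smt (verit) norm_ge_zero)
  have nq: "norm q = \<bar>d\<bar> + norm c + \<bar>r\<bar> + 1" using n by (simp add: q_def)
  have "norm q \<le> norm c + dist c q" by (metis dist_norm norm_triangle_sub norm_minus_commute add.commute)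
  then have "dist c q > r" using nq by simp
  then have "q \<in> - cball c r" by simp
  then show ?thesis using i by blast
qed

lemma L_hh:
  fixes n1 n2 :: "real^2"
  assumes n1: "norm n1 = 1" and n2: "norm n2 = 1"
    and disj: "{p. inner n1 p = d1} \<inter> {p. inner n2 p = d2} = {}"
    and disj2: "{p. inner n1 p > d1} \<inter> {p. inner n2 p > d2} = {}"
  shows "inner n1 n2 = -1"
proof -
  have u1: "n1$1*n1$1 + n1$2*n1$2 = 1" using norm2_2[of n1] n1 by (simp add: power2_eq_square)
  have u2: "n2$1*n2$1 + n2$2*n2$2 = 1" using norm2_2[of n2] n2 by (simp add: power2_eq_square)
  define dt where "dt = n1$1 * n2$2 - n1$2 * n2$1"
  have dt0: "dt = 0"
  proof (rule ccontr)
    assume dt: "dt \<noteq> 0"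
    define p :: "real^2" where "p = vector [(d1 * n2$2 - d2 * n1$2)/dt, (n1$1 * d2 - n2$1 * d1)/dt]"
    have e1: "n1$1*(d1 * n2$2 - d2 * n1$2) + n1$2*(n1$1 * d2 - n2$1 * d1) = d1*dt"
      by (simp add: dt_def algebra_simps)
    have e2: "n2$1*(d1 * n2$2 - d2 * n1$2) + n2$2*(n1$1 * d2 - n2$1 * d1) = d2*dt"
      by (simp add: dt_def algebra_simps)
    have "inner n1 p = (n1$1*(d1 * n2$2 - d2 * n1$2) + n1$2*(n1$1 * d2 - n2$1 * d1))/dt"
      by (simp add: p_def inner_2 add_divide_distrib)
    then have "inner n1 p = d1" using e1 dt by simp
    moreover have "inner n2 p = (n2$1*(d1 * n2$2 - d2 * n1$2) + n2$2*(n1$1 * d2 - n2$1 * d1))/dt"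
      by (simp add: p_def inner_2 add_divide_distrib)
    then have "inner n2 p = d2" using e2 dt by simp
    ultimately show False using disj by blast
  qed
  have sq: "(inner n1 n2)^2 = 1"
  proof -
    have "(inner n1 n2)^2 + dt^2 = (n1$1*n1$1 + n1$2*n1$2) * (n2$1*n2$1 + n2$2*n2$2)"
      by (simp add: inner_2 dt_def power2_eq_square algebra_simps)
    then show ?thesis using u1 u2 dt0 by simp
  qed
  have "inner n1 n2 \<noteq> 1"
  proof
    assume e: "inner n1 n2 = 1"
    have "(norm (n1 - n2))^2 = 0"
      using e n1 n2 by (simp add: power2_norm_eq_inner inner_diff_left inner_diff_right inner_commute
          norm_eq_sqrt_inner)
    then have "n1 = n2" by simp
    define q where "q = (\<bar>d1\<bar> + \<bar>d2\<bar> + 1) *\<^sub>R n1"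
    have nn: "inner n1 n1 = 1" using n1 by (simp add: norm_eq_sqrt_inner)
    have "inner n1 q > d1" "inner n2 q > d2" using nn \<open>n1 = n2\<close> by (simp_all add: q_def)
    then show False using disj2 by blast
  qed
  then show ?thesis using sq by (smt (verit) power2_eq_1_iff)
qed

lemma Bf_dd:
  assumes r1: "r1 > 0" and r2: "r2 > 0" and d: "dist c1 c2 = r1 + r2"
  shows "Bf (aug_row (ODisk c1 r1)) (aug_row (ODisk c2 r2)) = -1"
proof -
  have h: "(c1$1-c2$1)^2 + (c1$2-c2$2)^2 = (r1+r2)^2" using dist2_2[of c1 c2] d by simp
  show ?thesis using r1 r2 h
    by (simp add: Bf_def aug_simps norm2_2) (simp add: field_simps power2_eq_square, algebra)
qed

lemma Bf_dc:
  assumes r1: "r1 > 0" and r2: "r2 > 0" and d: "dist c1 c2 = r2 - r1"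
  shows "Bf (aug_row (ODisk c1 r1)) (aug_row (OCoDisk c2 r2)) = -1"
proof -
  have h: "(c1$1-c2$1)^2 + (c1$2-c2$2)^2 = (r2-r1)^2" using dist2_2[of c1 c2] d by simp
  show ?thesis using r1 r2 h
    by (simp add: Bf_def aug_simps norm2_2) (simp add: field_simps power2_eq_square, algebra)
qed

lemma Bf_dh:
  assumes r: "r > 0" and d: "inner n c + r = d"
  shows "Bf (aug_row (ODisk c r)) (aug_row (OHalf n d)) = -1"
proof -
  have h: "n$1*c$1 + n$2*c$2 + r = d" using d by (simp add: inner_2)
  have s1: "c $ 1 * n $ 1 / r + c $ 2 * n $ 2 / r - d / r = (c $ 1 * n $ 1 + c $ 2 * n $ 2 - d) / r"
    by (simp add: diff_divide_distrib add_divide_distrib)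
  have e: "c $ 1 * n $ 1 + c $ 2 * n $ 2 - d = - r" using h by (simp add: algebra_simps)
  show ?thesis using s1 e r by (simp add: Bf_def aug_simps)
qed

lemma Bf_hh:
  assumes "inner n1 n2 = -1"
  shows "Bf (aug_row (OHalf n1 d1)) (aug_row (OHalf n2 d2)) = -1"
  using assms by (simp add: Bf_def aug_simps inner_2)

lemma tangent_ex:
  assumes "tangent C1 C2" "\<not> (is_line C1 \<and> is_line C2)"
  shows "\<exists>p. p \<in> circ_set C1 \<and> p \<in> circ_set C2"
  using assms unfolding tangent_def by auto

lemma pair_pos:
  assumes w1: "ocircle_wf C1" and w2: "ocircle_wf C2" and t: "tangent C1 C2"
    and dj: "ointerior C1 \<inter> ointerior C2 = {}"
  shows "Bf (aug_row C1) (aug_row C2) = -1"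
proof (cases C1)
  case (ODisk c1 r1)
  note C1 = this
  show ?thesis
  proof (cases C2)
    case (ODisk c2 r2)
    obtain p where "p \<in> circ_set C1" "p \<in> circ_set C2" using tangent_ex[OF t] C1 ODisk by auto
    then show ?thesis using L_dd[of r1 r2 c1 c2 p] Bf_dd[of r1 r2 c1 c2] w1 w2 dj C1 ODisk by auto
  next
    case (OCoDisk c2 r2)
    obtain p where "p \<in> circ_set C1" "p \<in> circ_set C2" using tangent_ex[OF t] C1 OCoDisk by auto
    then show ?thesis using L_dc[of r1 c1 c2 r2 p] Bf_dc[of r1 r2 c1 c2] w1 w2 dj C1 OCoDisk by auto
  next
    case (OHalf n d)
    obtain p where "p \<in> circ_set C1" "p \<in> circ_set C2" using tangent_ex[OF t] C1 OHalf by auto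
    then show ?thesis using L_dh[of r1 n c1 d p] Bf_dh[of r1 n c1 d] w1 w2 dj C1 OHalf by auto
  qed
next
  case (OCoDisk c1 r1)
  note C1 = this
  show ?thesis
  proof (cases C2)
    case (ODisk c2 r2)
    obtain p where "p \<in> circ_set C1" "p \<in> circ_set C2" using tangent_ex[OF t] C1 ODisk by auto
    then show ?thesis using L_dc[of r2 c2 c1 r1 p] Bf_dc[of r2 r1 c2 c1] w1 w2 dj C1 ODisk
      by (auto simp: Bf_sym Int_commute)
  next
    case (OCoDisk c2 r2)
    then show ?thesis using L_cc[of c1 r1 c2 r2] dj C1 by auto
  next
    case (OHalf n d)
    then show ?thesis using L_ch[of n c1 r1 d] dj C1 w2 by auto
  qed
next
  case (OHalf n1 d1)
  note C1 = this
  show ?thesis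
  proof (cases C2)
    case (ODisk c2 r2)
    obtain p where "p \<in> circ_set C1" "p \<in> circ_set C2" using tangent_ex[OF t] C1 ODisk by auto
    then show ?thesis using L_dh[of r2 n1 c2 d1 p] Bf_dh[of r2 n1 c2 d1] w1 w2 dj C1 ODisk
      by (auto simp: Bf_sym Int_commute)
  next
    case (OCoDisk c2 r2)
    then show ?thesis using L_ch[of n1 c2 r2 d1] dj C1 w1 by (auto simp: Int_commute)
  next
    case (OHalf n2 d2)
    then show ?thesis using L_hh[of n1 n2 d1 d2] Bf_hh[of n1 n2 d1 d2] w1 w2 dj t C1
      by (auto simp: tangent_def)
  qed
qed

lemma oflip_wf: "ocircle_wf C \<Longrightarrow> ocircle_wf (oflip C)"
  by (cases C) auto
lemma oflip_circ: "circ_set (oflip C) = circ_set C"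
  by (cases C) auto
lemma oflip_line: "is_line (oflip C) = is_line C"
  by (cases C) auto
lemma oflip_tangent: "tangent C1 C2 \<Longrightarrow> tangent (oflip C1) (oflip C2)"
  unfolding tangent_def oflip_circ oflip_line by simp

lemma gram_entries:
  assumes "oriented_descartes D"
  shows "Bf (aug_row (D$i)) (aug_row (D$j)) = (if i = j then 1 else -1)"
proof (cases "i = j")
  case True
  then show ?thesis using assms Bf_diag by (simp add: oriented_descartes_def)
next
  case False
  have w: "ocircle_wf (D$i)" "ocircle_wf (D$j)" and t: "tangent (D$i) (D$j)"
    using assms False by (auto simp: oriented_descartes_def)
  from assms False consider
      "ointerior (D$i) \<inter> ointerior (D$j) = {}"
    | "ointerior (oflip (D$i)) \<inter> ointerior (oflip (D$j)) = {}"
    unfolding oriented_descartes_def by blast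
  then show ?thesis
  proof cases
    case 1 then show ?thesis using pair_pos[OF w t] False by simp
  next
    case 2
    have "Bf (aug_row (oflip (D$i))) (aug_row (oflip (D$j))) = -1"
      using pair_pos[OF oflip_wf[OF w(1)] oflip_wf[OF w(2)] oflip_tangent[OF t] 2] .
    then show ?thesis using False by (simp add: aug_oflip Bf_neg)
  qed
qed

definition Am :: "real^4^4" where
  "Am = (\<chi> i j. if (i = 1 \<and> j = 2) \<or> (i = 2 \<and> j = 1) then -1/2
                 else if i = j \<and> (i = 3 \<or> i = 4) then 1 else 0)"
definition Ai :: "real^4^4" where
  "Ai = (\<chi> i j. if (i = 1 \<and> j = 2) \<or> (i = 2 \<and> j = 1) then -2
                 else if i = j \<and> (i = 3 \<or> i = 4) then 1 else 0)"
definition Gm :: "real^4^4" where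
  "Gm = (\<chi> i j. if i = j then 1 else -1)"
definition Gi :: "real^4^4" where
  "Gi = (\<chi> i j. if i = j then 1/4 else -1/4)"

definition GramRel :: "real^4^4 \<Rightarrow> bool" where
  "GramRel W \<longleftrightarrow> W ** Am ** transpose W = Gm"

lemma gram_entry: "(W ** Am ** transpose W)$i$j = Bf (W$i) (W$j)"
  by (simp add: matrix_matrix_mult_def transpose_def sum_4 Am_def Bf_def algebra_simps)

lemma Gm_Gi: "Gm ** Gi = mat 1"
  by (simp add: vec_eq_iff forall_4 matrix_matrix_mult_def sum_4 Gm_def Gi_def mat_def)

lemma Ai_Am: "Ai ** Am = mat 1"
  by (simp add: vec_eq_iff forall_4 matrix_matrix_mult_def sum_4 Am_def Ai_def mat_def)

lemma descartes_gram:
  assumes "oriented_descartes D"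
  shows "GramRel (W_coord D)"
  unfolding GramRel_def vec_eq_iff
  using gram_entries[OF assms] by (simp add: gram_entry W_coord_def Gm_def)

lemma GramRel_inv:
  assumes "GramRel W"
  shows "(Am ** transpose W ** Gi) ** W = mat 1"
proof -
  have "W ** (Am ** transpose W ** Gi) = mat 1"
    using assms Gm_Gi by (simp add: GramRel_def matrix_mul_assoc)
  then show ?thesis using matrix_left_right_inverse by blast
qed

lemma GramRel_nz:
  assumes "GramRel W"
  shows "\<exists>k. W$k$2 \<noteq> 0"
proof (rule ccontr)
  assume "\<not> (\<exists>k. W$k$2 \<noteq> 0)"
  then have z: "\<And>k. W$k$2 = 0" by blast
  have "((Am ** transpose W ** Gi) ** W)$2$2 = 0"
    by (simp add: matrix_matrix_mult_def z)
  then show False using GramRel_inv[OF assms] by (simp add: mat_def)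
qed

lemma GramRel_desc:
  assumes "GramRel W"
  shows "2 * (W$1$2^2 + W$2$2^2 + W$3$2^2 + W$4$2^2) = (W$1$2 + W$2$2 + W$3$2 + W$4$2)^2"
proof -
  have "Ai ** ((Am ** transpose W ** Gi) ** W) = Ai" using GramRel_inv[OF assms] by simp
  then have "(Ai ** Am) ** (transpose W ** Gi ** W) = Ai" by (simp add: matrix_mul_assoc)
  then have e: "transpose W ** Gi ** W = Ai" using Ai_Am by simp
  have "(transpose W ** Gi ** W)$2$2 = 0" using e by (simp add: Ai_def)
  then have "(W$1$2^2 + W$2$2^2 + W$3$2^2 + W$4$2^2)/4
     - (2*W$1$2*W$2$2 + 2*W$1$2*W$3$2 + 2*W$1$2*W$4$2 + 2*W$2$2*W$3$2 + 2*W$2$2*W$4$2 + 2*W$3$2*W$4$2)/4 = 0"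
    by (simp add: matrix_matrix_mult_def transpose_def sum_4 Gi_def power2_eq_square field_simps)
  then show ?thesis by (simp add: power2_eq_square field_simps)
qed

definition Sm :: "4 \<Rightarrow> real^4^4" where
  "Sm i = (\<chi> j k. if j = i then (if k = i then -1 else 2) else (if k = j then 1 else 0))"
definition Nm :: "real^4^4" where
  "Nm = (\<chi> j k. if j = k then -1 else 0)"

definition intm :: "real^4^4 \<Rightarrow> bool" where
  "intm h \<longleftrightarrow> (\<forall>i j. h$i$j \<in> \<int>)"

definition good_h :: "real^4^4 \<Rightarrow> bool" where
  "good_h h \<longleftrightarrow> intm h \<and> (\<exists>hi. intm hi \<and> hi ** h = mat 1) \<and> h ** Gm ** transpose h = Gm"

lemma Sm_int: "intm (Sm i)"
  by (simp add: intm_def Sm_def)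
lemma St_int: "intm (transpose (Sm i))"
  by (simp add: intm_def Sm_def transpose_def)
lemma Nm_int: "intm Nm"
  by (simp add: intm_def Nm_def)

lemma Sm_inv: "Sm i ** Sm i = mat 1"
  using exhaust_4[of i]
  by (auto simp: vec_eq_iff forall_4 matrix_matrix_mult_def sum_4 Sm_def mat_def)

lemma St_inv: "transpose (Sm i) ** transpose (Sm i) = mat 1"
  by (metis Sm_inv matrix_transpose_mul transpose_mat)

lemma Nm_inv: "Nm ** Nm = mat 1"
  by (simp add: vec_eq_iff forall_4 matrix_matrix_mult_def sum_4 Nm_def mat_def)

lemma Sm_gram: "Sm i ** Gm ** transpose (Sm i) = Gm"
  using exhaust_4[of i]
  by (auto simp: vec_eq_iff forall_4 matrix_matrix_mult_def sum_4 Sm_def Gm_def transpose_def)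

lemma St_gram: "transpose (Sm i) ** Gm ** transpose (transpose (Sm i)) = Gm"
  using exhaust_4[of i]
  by (auto simp: vec_eq_iff forall_4 matrix_matrix_mult_def sum_4 Sm_def Gm_def transpose_def)

lemma Nm_gram: "Nm ** Gm ** transpose Nm = Gm"
  by (simp add: vec_eq_iff forall_4 matrix_matrix_mult_def sum_4 Nm_def Gm_def transpose_def)

lemma good_Sm: "good_h (Sm i)"
  using Sm_int Sm_inv Sm_gram unfolding good_h_def by blast
lemma good_St: "good_h (transpose (Sm i))"
  using St_int St_inv St_gram unfolding good_h_def by blast
lemma good_Nm: "good_h Nm"
  using Nm_int Nm_inv Nm_gram unfolding good_h_def by blast
lemma good_id: "good_h (mat 1)"
proof -
  have i: "intm (mat 1)" by (simp add: intm_def mat_def)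
  show ?thesis unfolding good_h_def using i
    by (auto simp: matrix_mul_lid matrix_mul_rid transpose_mat intro!: exI[of _ "mat 1"])
qed

lemma intm_mult: "intm a \<Longrightarrow> intm b \<Longrightarrow> intm (a ** b)"
  unfolding intm_def matrix_matrix_mult_def by (auto intro!: Ints_sum Ints_mult)

lemma good_mult:
  assumes "good_h a" "good_h b"
  shows "good_h (a ** b)"
proof -
  obtain ai bi where ai: "intm ai" "ai ** a = mat 1" and bi: "intm bi" "bi ** b = mat 1"
    using assms unfolding good_h_def by blast
  have "(bi ** ai) ** (a ** b) = mat 1"
    by (metis ai(2) bi(2) matrix_mul_assoc matrix_mul_lid)
  moreover have "intm (bi ** ai)" using ai bi intm_mult by blast
  moreover have "(a ** b) ** Gm ** transpose (a ** b) = Gm"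
  proof -
    have "(a ** b) ** Gm ** transpose (a ** b) = a ** (b ** Gm ** transpose b) ** transpose a"
      by (simp add: matrix_transpose_mul matrix_mul_assoc)
    then show ?thesis using assms by (simp add: good_h_def)
  qed
  ultimately show ?thesis using assms intm_mult unfolding good_h_def by blast
qed

lemma GramRel_mult:
  assumes "good_h h" "GramRel W"
  shows "GramRel (h ** W)"
proof -
  have "(h ** W) ** Am ** transpose (h ** W) = h ** (W ** Am ** transpose W) ** transpose h"
    by (simp add: matrix_transpose_mul matrix_mul_assoc)
  then show ?thesis using assms by (simp add: good_h_def GramRel_def)
qed

lemma intcol_mult:
  assumes "intm h" "\<forall>i. W$i$2 \<in> \<int>"
  shows "\<forall>i. (h ** W)$i$2 \<in> \<int>"
  using assms unfolding intm_def matrix_matrix_mult_def by (auto intro!: Ints_sum Ints_mult)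

definition csum :: "real^4^4 \<Rightarrow> real" where
  "csum W = W$1$2 + W$2$2 + W$3$2 + W$4$2"

lemma csum_Sm: "csum (Sm i ** W) = 3 * csum W - 4 * W$i$2"
  using exhaust_4[of i]
  by (auto simp: csum_def matrix_matrix_mult_def sum_4 Sm_def)

lemma csum_St: "csum (transpose (Sm i) ** W) = csum W + 4 * W$i$2"
  using exhaust_4[of i]
  by (auto simp: csum_def matrix_matrix_mult_def sum_4 Sm_def transpose_def)

lemma csum_Nm: "csum (Nm ** W) = - csum W"
  by (simp add: csum_def matrix_matrix_mult_def sum_4 Nm_def)

lemma no_neg:
  fixes a b c d s :: real
  assumes "s > 0" "a + b + c + d = s" "2*(a^2+b^2+c^2+d^2) = s^2"
    "a \<le> -s/2" "b \<le> s/2" "c \<le> s/2" "d \<le> s/2"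
  shows False
proof -
  have e: "s = -2*a" "s = 2*b" "s = 2*c" "s = 2*d" using assms by linarith+
  have "s^2 = 4*a^2" using e(1) by (simp add: power2_eq_square)
  moreover have "s^2 = 4*b^2" using e(2) by (simp add: power2_eq_square)
  moreover have "s^2 = 4*c^2" using e(3) by (simp add: power2_eq_square)
  moreover have "s^2 = 4*d^2" using e(4) by (simp add: power2_eq_square)
  moreover have "s^2 > 0" using assms by simp
  moreover have "2*a^2+2*b^2+2*c^2+2*d^2 = s^2" using assms(3) by simp
  ultimately show False by linarith
qed

lemma stuck4:
  fixes a b c d s :: real
  assumes s: "s > 0" "a + b + c + d = s" and de: "2*(a^2+b^2+c^2+d^2) = s^2"
    and ra: "\<not>(s/2 < a \<and> a < s) \<and> \<not>(-s/2 < a \<and> a < 0)"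
    and rb: "\<not>(s/2 < b \<and> b < s) \<and> \<not>(-s/2 < b \<and> b < 0)"
    and rc: "\<not>(s/2 < c \<and> c < s) \<and> \<not>(-s/2 < c \<and> c < 0)"
    and rd: "\<not>(s/2 < d \<and> d < s) \<and> \<not>(-s/2 < d \<and> d < 0)"
  shows "(a = 0 \<or> a = s/2) \<and> (b = 0 \<or> b = s/2) \<and> (c = 0 \<or> c = s/2) \<and> (d = 0 \<or> d = s/2)"
proof -
  have sq: "\<And>y::real. y \<ge> s \<Longrightarrow> y^2 \<ge> s^2" using s by (simp add: power_mono)
  have pos: "a^2 \<ge> 0" "b^2 \<ge> 0" "c^2 \<ge> 0" "d^2 \<ge> 0" by simp_all
  have s2: "s^2 > 0" using s by simp
  have de': "2*a^2 + 2*b^2 + 2*c^2 + 2*d^2 = s^2" using de by simp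
  have a_lt: "a < s"
  proof (rule ccontr)
    assume "\<not> a < s" then have "s^2 \<le> a^2" using sq[of a] by simp
    then show False using pos de' s2 by linarith
  qed
  have b_lt: "b < s"
  proof (rule ccontr)
    assume "\<not> b < s" then have "s^2 \<le> b^2" using sq[of b] by simp
    then show False using pos de' s2 by linarith
  qed
  have c_lt: "c < s"
  proof (rule ccontr)
    assume "\<not> c < s" then have "s^2 \<le> c^2" using sq[of c] by simp
    then show False using pos de' s2 by linarith
  qed
  have d_lt: "d < s"
  proof (rule ccontr)
    assume "\<not> d < s" then have "s^2 \<le> d^2" using sq[of d] by simp
    then show False using pos de' s2 by linarith
  qed
  have r: "a \<le> -s/2 \<or> (0 \<le> a \<and> a \<le> s/2)" "b \<le> -s/2 \<or> (0 \<le> b \<and> b \<le> s/2)"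
    "c \<le> -s/2 \<or> (0 \<le> c \<and> c \<le> s/2)" "d \<le> -s/2 \<or> (0 \<le> d \<and> d \<le> s/2)"
    using ra rb rc rd a_lt b_lt c_lt d_lt by linarith+
  have le: "a \<le> s/2" "b \<le> s/2" "c \<le> s/2" "d \<le> s/2" using r s by linarith+
  have "\<not> a \<le> -s/2" using no_neg[of s a b c d] s de le by auto
  moreover have "\<not> b \<le> -s/2" using no_neg[of s b a c d] s de le by (auto simp: ac_simps)
  moreover have "\<not> c \<le> -s/2" using no_neg[of s c a b d] s de le by (auto simp: ac_simps)
  moreover have "\<not> d \<le> -s/2" using no_neg[of s d a b c] s de le by (auto simp: ac_simps)
  ultimately have nn: "0 \<le> a" "0 \<le> b" "0 \<le> c" "0 \<le> d" using r by auto
  have ta: "a*(s/2 - a) \<ge> 0" using nn le by simp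
  have tb: "b*(s/2 - b) \<ge> 0" using nn le by simp
  have tc: "c*(s/2 - c) \<ge> 0" using nn le by simp
  have td: "d*(s/2 - d) \<ge> 0" using nn le by simp
  have "a*(s/2 - a) + b*(s/2 - b) + c*(s/2 - c) + d*(s/2 - d) = (a+b+c+d) * s / 2 - (a^2+b^2+c^2+d^2)"
    by (simp add: power2_eq_square algebra_simps)
  also have "\<dots> = 0" using s de by (simp add: power2_eq_square field_simps)
  finally have "a*(s/2 - a) = 0" "b*(s/2 - b) = 0" "c*(s/2 - c) = 0" "d*(s/2 - d) = 0"
    using ta tb tc td by linarith+
  then show ?thesis by auto
qed

lemma real_int_le:
  assumes "x \<in> \<int>" "\<bar>x\<bar> < real (Suc n)"
  shows "\<bar>x\<bar> \<le> real n"
proof -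
  obtain k where k: "x = of_int k" using assms(1) Ints_cases by blast
  then have "\<bar>k\<bar> < int n + 1" using assms(2) by simp
  then have "\<bar>k\<bar> \<le> int n" by linarith
  then show ?thesis using k by (metis of_int_abs of_int_le_iff of_int_of_nat_eq)
qed

definition stuck_form :: "real^4^4 \<Rightarrow> bool" where
  "stuck_form V \<longleftrightarrow> (\<exists>m. m > 0 \<and> (\<forall>i. V$i$2 = 0 \<or> V$i$2 = m) \<and>
      (\<exists>i. V$i$2 = 0) \<and> (\<exists>j. V$j$2 = m))"

lemma descent_pos:
  assumes IH: "\<And>W'. GramRel W' \<Longrightarrow> (\<forall>i. W'$i$2 \<in> \<int>) \<Longrightarrow> \<bar>csum W'\<bar> < \<bar>csum W\<bar> \<Longrightarrow>
      \<exists>h. good_h h \<and> stuck_form (h ** W')"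
    and g: "GramRel W" and ic: "\<forall>i. W$i$2 \<in> \<int>" and sp: "csum W \<ge> 0"
  shows "\<exists>h. good_h h \<and> stuck_form (h ** W)"
proof -
  let ?s = "csum W"
  have de: "2 * (W$1$2^2 + W$2$2^2 + W$3$2^2 + W$4$2^2) = ?s^2"
    using GramRel_desc[OF g] by (simp add: csum_def)
  have s0: "?s > 0"
  proof (rule ccontr)
    assume "\<not> ?s > 0"
    then have "?s = 0" using sp by simp
    then have "W$1$2^2 + W$2$2^2 + W$3$2^2 + W$4$2^2 = 0" using de by simp
    moreover have "W$1$2^2 \<ge> 0" "W$2$2^2 \<ge> 0" "W$3$2^2 \<ge> 0" "W$4$2^2 \<ge> 0" by simp_all
    ultimately have "W$1$2^2 = 0 \<and> W$2$2^2 = 0 \<and> W$3$2^2 = 0 \<and> W$4$2^2 = 0" by linarith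
    then have "W$1$2 = 0 \<and> W$2$2 = 0 \<and> W$3$2 = 0 \<and> W$4$2 = 0" by simp
    then have "\<forall>k. W$k$2 = 0" unfolding forall_4 by blast
    then show False using GramRel_nz[OF g] by blast
  qed
  show ?thesis
  proof (cases "\<exists>i. ?s/2 < W$i$2 \<and> W$i$2 < ?s")
    case True
    then obtain i where i: "?s/2 < W$i$2" "W$i$2 < ?s" by blast
    have "\<bar>csum (Sm i ** W)\<bar> < \<bar>?s\<bar>" using i s0 by (simp add: csum_Sm abs_less_iff)
    then obtain h where h: "good_h h" "stuck_form (h ** (Sm i ** W))"
      using IH[OF GramRel_mult[OF good_Sm g] intcol_mult[OF Sm_int ic]] by blast
    then show ?thesis using good_mult[OF h(1) good_Sm]
      by (metis matrix_mul_assoc)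
  next
    case False
    note F1 = False
    show ?thesis
    proof (cases "\<exists>i. -?s/2 < W$i$2 \<and> W$i$2 < 0")
      case True
      then obtain i where i: "-?s/2 < W$i$2" "W$i$2 < 0" by blast
      have "\<bar>csum (transpose (Sm i) ** W)\<bar> < \<bar>?s\<bar>" using i s0 by (simp add: csum_St abs_less_iff)
      then obtain h where h: "good_h h" "stuck_form (h ** (transpose (Sm i) ** W))"
        using IH[OF GramRel_mult[OF good_St g] intcol_mult[OF St_int ic]] by blast
      then show ?thesis using good_mult[OF h(1) good_St]
        by (metis matrix_mul_assoc)
    next
      case False
      have all: "\<forall>i. W$i$2 = 0 \<or> W$i$2 = ?s/2"
      proof -
        have A: "\<forall>i. \<not>(?s/2 < W$i$2 \<and> W$i$2 < ?s) \<and> \<not>(-?s/2 < W$i$2 \<and> W$i$2 < 0)"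
            using F1 False by blast
        have "(W$1$2 = 0 \<or> W$1$2 = ?s/2) \<and> (W$2$2 = 0 \<or> W$2$2 = ?s/2) \<and>
              (W$3$2 = 0 \<or> W$3$2 = ?s/2) \<and> (W$4$2 = 0 \<or> W$4$2 = ?s/2)"
            by (rule stuck4[OF s0 _ de A[rule_format, of 1] A[rule_format, of 2]
                  A[rule_format, of 3] A[rule_format, of 4]]) (simp add: csum_def)
        then show ?thesis unfolding forall_4 by blast
      qed
      have ex0: "\<exists>i. W$i$2 = 0"
      proof (rule ccontr)
        assume "\<not> ?thesis"
        then have "\<forall>i. W$i$2 = ?s/2" using all by blast
        then have "W$1$2 = ?s/2" "W$2$2 = ?s/2" "W$3$2 = ?s/2" "W$4$2 = ?s/2" by blast+
        moreover have "?s = W$1$2 + W$2$2 + W$3$2 + W$4$2" by (simp add: csum_def)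
        ultimately show False using s0 by linarith
      qed
      have ex1: "\<exists>i. W$i$2 = ?s/2"
      proof (rule ccontr)
        assume "\<not> ?thesis"
        then have "\<forall>i. W$i$2 = 0" using all by blast
        then have "W$1$2 = 0" "W$2$2 = 0" "W$3$2 = 0" "W$4$2 = 0" by blast+
        moreover have "?s = W$1$2 + W$2$2 + W$3$2 + W$4$2" by (simp add: csum_def)
        ultimately show False using s0 by linarith
      qed
      have "stuck_form (mat 1 ** W)"
        unfolding stuck_form_def using all ex0 ex1 s0 by (intro exI[of _ "?s/2"]) simp
      then show ?thesis using good_id by blast
    qed
  qed
qed

lemma descent_n:
  "\<And>W. GramRel W \<Longrightarrow> (\<forall>i. W$i$2 \<in> \<int>) \<Longrightarrow> \<bar>csum W\<bar> < real n \<Longrightarrow>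
      \<exists>h. good_h h \<and> stuck_form (h ** W)"
proof (induction n)
  case 0
  then show ?case by simp
next
  case (Suc n)
  have cint: "\<And>V. (\<forall>i. V$i$2 \<in> \<int>) \<Longrightarrow> csum V \<in> \<int>"
    by (simp add: csum_def)
  have IH: "\<And>W'. GramRel W' \<Longrightarrow> (\<forall>i. W'$i$2 \<in> \<int>) \<Longrightarrow> \<bar>csum W'\<bar> < \<bar>csum W\<bar> \<Longrightarrow>
      \<exists>h. good_h h \<and> stuck_form (h ** W')"
  proof -
    fix W' assume a: "GramRel W'" "\<forall>i. W'$i$2 \<in> \<int>" "\<bar>csum W'\<bar> < \<bar>csum W\<bar>"
    have "\<bar>csum W\<bar> \<le> real n" using real_int_le[OF cint[OF Suc.prems(2)] Suc.prems(3)] .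
    then show "\<exists>h. good_h h \<and> stuck_form (h ** W')" using Suc.IH[OF a(1) a(2)] a(3) by simp
  qed
  show ?case
  proof (cases "csum W \<ge> 0")
    case True
    then show ?thesis using descent_pos[OF IH Suc.prems(1) Suc.prems(2)] by blast
  next
    case False
    have g': "GramRel (Nm ** W)" using GramRel_mult[OF good_Nm Suc.prems(1)] .
    have i': "\<forall>i. (Nm ** W)$i$2 \<in> \<int>" using intcol_mult[OF Nm_int Suc.prems(2)] .
    have IH': "\<And>W'. GramRel W' \<Longrightarrow> (\<forall>i. W'$i$2 \<in> \<int>) \<Longrightarrow> \<bar>csum W'\<bar> < \<bar>csum (Nm ** W)\<bar> \<Longrightarrow>
      \<exists>h. good_h h \<and> stuck_form (h ** W')" using IH by (simp add: csum_Nm)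
    obtain h where h: "good_h h" "stuck_form (h ** (Nm ** W))"
      using descent_pos[OF IH' g' i'] False by (auto simp: csum_Nm)
    then show ?thesis using good_mult[OF h(1) good_Nm] by (metis matrix_mul_assoc)
  qed
qed

lemma descent:
  assumes "GramRel W" "\<forall>i. W$i$2 \<in> \<int>"
  shows "\<exists>h. good_h h \<and> stuck_form (h ** W)"
proof -
  obtain n where "\<bar>csum W\<bar> < real n" using reals_Archimedean2 by blast
  then show ?thesis using descent_n assms by blast
qed

definition rot :: "real \<Rightarrow> real \<Rightarrow> real^2 \<Rightarrow> real^2" where
  "rot a b p = vector [a * p$1 - b * p$2, b * p$1 + a * p$2]"

definition mv :: "real \<Rightarrow> real \<Rightarrow> real^2 \<Rightarrow> real^2 \<Rightarrow> real^2" where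
  "mv a b t p = rot a b p + t"

fun omove :: "real \<Rightarrow> real \<Rightarrow> real^2 \<Rightarrow> ocircle \<Rightarrow> ocircle" where
  "omove a b t (ODisk c r) = ODisk (mv a b t c) r"
| "omove a b t (OCoDisk c r) = OCoDisk (mv a b t c) r"
| "omove a b t (OHalf n d) = OHalf (rot a b n) (d + inner (rot a b n) t)"

definition cmove :: "real \<Rightarrow> real \<Rightarrow> real^2 \<Rightarrow> ocircle^4 \<Rightarrow> ocircle^4" where
  "cmove a b t D = (\<chi> i. omove a b t (D$i))"

definition linrow :: "real \<Rightarrow> real \<Rightarrow> real^2 \<Rightarrow> real^4 \<Rightarrow> real^4" where
  "linrow a b t x = vector [x$1 + 2 * ((a * x$3 - b * x$4) * t$1 + (b * x$3 + a * x$4) * t$2)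
                              + x$2 * (t$1 * t$1 + t$2 * t$2),
                            x$2, a * x$3 - b * x$4 + x$2 * t$1, b * x$3 + a * x$4 + x$2 * t$2]"

lemma rot_comp [simp]: "rot a b p $ 1 = a * p$1 - b * p$2" "rot a b p $ 2 = b * p$1 + a * p$2"
  by (simp_all add: rot_def)

lemma mv_comp [simp]: "mv a b t p $ 1 = a * p$1 - b * p$2 + t$1" "mv a b t p $ 2 = b * p$1 + a * p$2 + t$2"
  by (simp_all add: mv_def)

lemma norm_rot: "a^2 + b^2 = 1 \<Longrightarrow> norm (rot a b p) = norm p"
proof -
  assume ab: "a^2 + b^2 = 1"
  have "(norm (rot a b p))^2 = (a^2 + b^2) * (p$1^2 + p$2^2)"
    by (simp add: norm2_2) (simp add: power2_eq_square algebra_simps)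
  then have "(norm (rot a b p))^2 = (norm p)^2" using ab by (simp add: norm2_2)
  then show ?thesis by (simp add: power2_eq_iff_nonneg)
qed

lemma rot_diff: "rot a b p - rot a b q = rot a b (p - q)"
  by (simp add: vec_eq_iff forall_2 algebra_simps)

lemma dist_mv: "a^2 + b^2 = 1 \<Longrightarrow> dist (mv a b t p) (mv a b t q) = dist p q"
  by (simp add: dist_norm mv_def rot_diff norm_rot)

definition mvinv :: "real \<Rightarrow> real \<Rightarrow> real^2 \<Rightarrow> real^2 \<Rightarrow> real^2" where
  "mvinv a b t = mv a (-b) (- rot a (-b) t)"

lemma rot_inv1: "a^2 + b^2 = 1 \<Longrightarrow> rot a (-b) (rot a b p) = p"
proof -
  assume ab: "a^2 + b^2 = 1"
  have "rot a (-b) (rot a b p) $ 1 = (a^2 + b^2) * p$1" "rot a (-b) (rot a b p) $ 2 = (a^2 + b^2) * p$2"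
    by (simp_all add: power2_eq_square algebra_simps)
  then show ?thesis using ab by (simp add: vec_eq_iff forall_2)
qed

lemma rot_inv2: "a^2 + b^2 = 1 \<Longrightarrow> rot a b (rot a (-b) p) = p"
  using rot_inv1[of a "-b" p] by simp

lemma rot_add: "rot a b (p + q) = rot a b p + rot a b q"
  by (simp add: vec_eq_iff forall_2 algebra_simps)
lemma rot_minus: "rot a b (- p) = - rot a b p"
  by (simp add: vec_eq_iff forall_2 algebra_simps)

lemma mvinv1: "a^2 + b^2 = 1 \<Longrightarrow> mvinv a b t (mv a b t p) = p"
  by (simp add: mvinv_def mv_def rot_add rot_inv1)
lemma mvinv2: "a^2 + b^2 = 1 \<Longrightarrow> mv a b t (mvinv a b t p) = p"
  by (simp add: mvinv_def mv_def rot_add rot_minus rot_inv2 rot_diff)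

lemma inner_rot_adj: "inner n (rot a (-b) y) = inner (rot a b n) y"
  by (simp add: inner_2 algebra_simps)

lemma image_mv:
  assumes ab: "a^2 + b^2 = 1"
  shows "mv a b t ` S = {x. mvinv a b t x \<in> S}"
proof (rule set_eqI, rule iffI)
  fix x assume "x \<in> mv a b t ` S"
  then obtain y where "y \<in> S" "x = mv a b t y" by blast
  then show "x \<in> {x. mvinv a b t x \<in> S}" using mvinv1[OF ab] by simp
next
  fix x assume "x \<in> {x. mvinv a b t x \<in> S}"
  then have "mv a b t (mvinv a b t x) \<in> mv a b t ` S" by blast
  then show "x \<in> mv a b t ` S" using mvinv2[OF ab] by simp
qed

lemma ex1_image:
  assumes inj: "inj f"
  shows "(\<exists>!p. p \<in> f ` S) \<longleftrightarrow> (\<exists>!p. p \<in> S)"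
proof
  assume "\<exists>!p. p \<in> f ` S"
  then obtain p where p: "p \<in> f ` S" and u: "\<And>p'. p' \<in> f ` S \<Longrightarrow> p' = p" by blast
  obtain q where q: "q \<in> S" "p = f q" using p by blast
  have "\<And>q'. q' \<in> S \<Longrightarrow> q' = q"
  proof -
    fix q' assume "q' \<in> S"
    then have "f q' = f q" using u q by blast
    then show "q' = q" using inj by (simp add: inj_eq)
  qed
  then show "\<exists>!p. p \<in> S" using q(1) by (intro ex1I[of _ q])
next
  assume "\<exists>!p. p \<in> S"
  then obtain q where q: "q \<in> S" and u: "\<And>q'. q' \<in> S \<Longrightarrow> q' = q" by blast
  have v: "\<And>p'. p' \<in> f ` S \<Longrightarrow> p' = f q" using u by blast
  show "\<exists>!p. p \<in> f ` S"
  proof (rule ex1I[of _ "f q"])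
    show "f q \<in> f ` S" using q by blast
  next
    fix p' assume "p' \<in> f ` S" then show "p' = f q" by (rule v)
  qed
qed

lemma inner_mvinv: "a^2 + b^2 = 1 \<Longrightarrow> inner n (mvinv a b t x) = inner (rot a b n) x - inner (rot a b n) t"
  by (simp add: mvinv_def mv_def rot_diff inner_rot_adj inner_diff_right)

lemma dist_mvinv: "a^2 + b^2 = 1 \<Longrightarrow> dist c (mvinv a b t x) = dist (mv a b t c) x"
  by (metis dist_mv mvinv2)

lemma circ_omove: "a^2 + b^2 = 1 \<Longrightarrow> circ_set (omove a b t C) = mv a b t ` circ_set C"
  by (cases C) (auto simp: image_mv dist_mvinv inner_mvinv)

lemma oint_omove: "a^2 + b^2 = 1 \<Longrightarrow> ointerior (omove a b t C) = mv a b t ` ointerior C"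
  by (cases C) (auto simp: image_mv dist_mvinv inner_mvinv)

lemma wf_omove: "a^2 + b^2 = 1 \<Longrightarrow> ocircle_wf C \<Longrightarrow> ocircle_wf (omove a b t C)"
  by (cases C) (auto simp: norm_rot)

lemma line_omove: "is_line (omove a b t C) = is_line C"
  by (cases C) auto

lemma oflip_omove: "oflip (omove a b t C) = omove a b t (oflip C)"
  by (cases C) (auto simp: rot_minus)

lemma inj_mv: "a^2 + b^2 = 1 \<Longrightarrow> inj (mv a b t)"
  by (metis injI mvinv1)

lemma tangent_omove:
  assumes ab: "a^2 + b^2 = 1" and t: "tangent C1 C2"
  shows "tangent (omove a b t C1) (omove a b t C2)"
proof -
  have inj: "inj (mv a b t)" using inj_mv[OF ab] .
  have e: "circ_set (omove a b t C1) \<inter> circ_set (omove a b t C2) = mv a b t ` (circ_set C1 \<inter> circ_set C2)"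
    using circ_omove[OF ab] image_Int[OF inj] by simp
  have u: "\<And>S. (\<exists>!p. p \<in> mv a b t ` S) \<longleftrightarrow> (\<exists>!p. p \<in> S)"
    using ex1_image[OF inj] .
  show ?thesis using t unfolding tangent_def e line_omove u image_is_empty .
qed

lemma od_cmove:
  assumes ab: "a^2 + b^2 = 1" and od: "oriented_descartes D"
  shows "oriented_descartes (cmove a b t D)"
proof -
  have inj: "inj (mv a b t)" using inj_mv[OF ab] .
  have dj: "\<And>C1 C2. ointerior C1 \<inter> ointerior C2 = {} \<Longrightarrow>
      ointerior (omove a b t C1) \<inter> ointerior (omove a b t C2) = {}"
    using oint_omove[OF ab] image_Int[OF inj] by (metis image_empty)
  have dj2: "\<And>C1 C2. ointerior (oflip C1) \<inter> ointerior (oflip C2) = {} \<Longrightarrow>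
      ointerior (oflip (omove a b t C1)) \<inter> ointerior (oflip (omove a b t C2)) = {}"
    using dj by (simp add: oflip_omove)
  have c: "\<And>i. cmove a b t D $ i = omove a b t (D$i)" by (simp add: cmove_def)
  have w0: "\<forall>i. ocircle_wf (D$i)" using od by (simp add: oriented_descartes_def)
  have t0: "\<forall>i j. i \<noteq> j \<longrightarrow> tangent (D$i) (D$j)" using od by (simp add: oriented_descartes_def)
  have 1: "\<forall>i. ocircle_wf (cmove a b t D $ i)"
    using w0 wf_omove[OF ab] by (simp add: c)
  have 2: "\<forall>i j. i \<noteq> j \<longrightarrow> tangent (cmove a b t D $ i) (cmove a b t D $ j)"
    using t0 tangent_omove[OF ab] by (simp add: c)
  from od have "(\<forall>i j. i \<noteq> j \<longrightarrow> ointerior (D$i) \<inter> ointerior (D$j) = {}) \<or>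
      (\<forall>i j. i \<noteq> j \<longrightarrow> ointerior (oflip (D$i)) \<inter> ointerior (oflip (D$j)) = {})"
    unfolding oriented_descartes_def by blast
  then have 3: "(\<forall>i j. i \<noteq> j \<longrightarrow> ointerior (cmove a b t D $ i) \<inter> ointerior (cmove a b t D $ j) = {}) \<or>
      (\<forall>i j. i \<noteq> j \<longrightarrow> ointerior (oflip (cmove a b t D $ i)) \<inter> ointerior (oflip (cmove a b t D $ j)) = {})"
  proof
    assume h: "\<forall>i j. i \<noteq> j \<longrightarrow> ointerior (D$i) \<inter> ointerior (D$j) = {}"
    show ?thesis unfolding c using dj h by simp
  next
    assume h: "\<forall>i j. i \<noteq> j \<longrightarrow> ointerior (oflip (D$i)) \<inter> ointerior (oflip (D$j)) = {}"
    show ?thesis unfolding c using dj2 h by simp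
  qed
  show ?thesis unfolding oriented_descartes_def using 1 2 3 by blast
qed

lemma aug_omove:
  assumes ab: "a^2 + b^2 = 1" and wf: "ocircle_wf C"
  shows "aug_row (omove a b t C) = linrow a b t (aug_row C)"
proof (cases C)
  case (ODisk c r)
  then have r: "r > 0" using wf by simp
  have "(norm (mv a b t c))^2 = (a^2+b^2) * (c$1^2 + c$2^2) + 2 * ((a*c$1 - b*c$2)*t$1 + (b*c$1 + a*c$2)*t$2) + (t$1^2 + t$2^2)"
    by (simp add: norm2_2) (simp add: power2_eq_square algebra_simps)
  then have n: "(norm (mv a b t c))^2 = (norm c)^2 + 2 * ((a*c$1 - b*c$2)*t$1 + (b*c$1 + a*c$2)*t$2) + (t$1^2 + t$2^2)"
    using ab by (simp add: norm2_2)
  show ?thesis unfolding ODisk using r n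
    by (simp add: vec_eq_iff forall_4 aug_simps linrow_def) (simp add: field_simps power2_eq_square)
next
  case (OCoDisk c r)
  then have r: "r > 0" using wf by simp
  have "(norm (mv a b t c))^2 = (a^2+b^2) * (c$1^2 + c$2^2) + 2 * ((a*c$1 - b*c$2)*t$1 + (b*c$1 + a*c$2)*t$2) + (t$1^2 + t$2^2)"
    by (simp add: norm2_2) (simp add: power2_eq_square algebra_simps)
  then have n: "(norm (mv a b t c))^2 = (norm c)^2 + 2 * ((a*c$1 - b*c$2)*t$1 + (b*c$1 + a*c$2)*t$2) + (t$1^2 + t$2^2)"
    using ab by (simp add: norm2_2)
  show ?thesis unfolding OCoDisk using r n
    by (simp add: vec_eq_iff forall_4 aug_simps linrow_def) (simp add: field_simps power2_eq_square)
next
  case (OHalf n d)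
  show ?thesis unfolding OHalf
    by (simp add: vec_eq_iff forall_4 aug_simps linrow_def inner_2 algebra_simps)
qed

lemma euclid_mv: "a^2 + b^2 = 1 \<Longrightarrow> euclidean_motion (mv a b t)"
  by (simp add: euclidean_motion_def dist_mv)

lemma GramRel_Bf:
  assumes "GramRel V"
  shows "Bf (V$i) (V$j) = (if i = j then 1 else -1)"
proof -
  have "(V ** Am ** transpose V)$i$j = Gm$i$j" using assms by (simp add: GramRel_def)
  then show ?thesis by (simp add: gram_entry Gm_def)
qed

lemma lagrange2: "(n2 * v1 - n1 * v2)^2 + (n1 * v1 + n2 * v2)^2 = (n1^2+n2^2) * (v1^2+v2^2::real)"
  by (simp add: power2_eq_square algebra_simps)

lemma sq_int:
  fixes z :: real
  assumes "z^2 = 0 \<or> z^2 = 4"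
  shows "z \<in> \<int>"
proof -
  have "z = 0 \<or> z = 2 \<or> z = -2"
  proof (cases "z^2 = 0")
    case True then show ?thesis by simp
  next
    case False
    then have "z^2 = 2^2" using assms by simp
    then show ?thesis using power2_eq_iff by blast
  qed
  then show ?thesis by auto
qed

lemma frame:
  assumes G: "GramRel V" and st: "stuck_form V" and ic: "\<forall>i. V$i$2 \<in> \<int>"
  shows "\<exists>a b t. a^2 + b^2 = 1 \<and> (\<forall>k. linrow a b t (V$k) $ 2 \<in> \<int> \<and>
           linrow a b t (V$k) $ 3 \<in> \<int> \<and> linrow a b t (V$k) $ 4 \<in> \<int>)"
proof -
  obtain m i0 j0 where m: "m > 0" and all: "\<forall>i. V$i$2 = 0 \<or> V$i$2 = m"
    and i0: "V$i0$2 = 0" and j0: "V$j0$2 = m"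
    using st unfolding stuck_form_def by blast
  have B: "\<And>i j. V$i$3 * V$j$3 + V$i$4 * V$j$4 - (V$i$1 * V$j$2 + V$i$2 * V$j$1)/2
      = (if i = j then 1 else -1)"
    using GramRel_Bf[OF G] by (simp add: Bf_def)
  define n1 where "n1 = V$i0$3"
  define n2 where "n2 = V$i0$4"
  have nn: "n1^2 + n2^2 = 1" using B[of i0 i0] i0 by (simp add: n1_def n2_def power2_eq_square)
  define a where "a = n2"
  define b where "b = n1"
  define t :: "real^2" where "t = vector [- (a * V$j0$3 - b * V$j0$4)/m, - (b * V$j0$3 + a * V$j0$4)/m]"
  have ab: "a^2 + b^2 = 1" using nn by (simp add: a_def b_def add.commute)
  have "\<forall>k. linrow a b t (V$k) $ 2 \<in> \<int> \<and>
           linrow a b t (V$k) $ 3 \<in> \<int> \<and> linrow a b t (V$k) $ 4 \<in> \<int>"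
  proof
    fix k
    have c2: "linrow a b t (V$k) $ 2 \<in> \<int>" using ic by (simp add: linrow_def)
    show "linrow a b t (V$k) $ 2 \<in> \<int> \<and>
           linrow a b t (V$k) $ 3 \<in> \<int> \<and> linrow a b t (V$k) $ 4 \<in> \<int>"
    proof (cases "V$k$2 = 0")
      case True
      let ?z3 = "n2 * V$k$3 - n1 * V$k$4"
      let ?z4 = "n1 * V$k$3 + n2 * V$k$4"
      have e3: "linrow a b t (V$k) $ 3 = ?z3" using True by (simp add: linrow_def a_def b_def)
      have e4: "linrow a b t (V$k) $ 4 = ?z4" using True by (simp add: linrow_def a_def b_def)
      have z4: "?z4 = (if i0 = k then 1 else -1)"
        using B[of i0 k] True i0 by (simp add: n1_def n2_def algebra_simps)
      have wk: "V$k$3^2 + V$k$4^2 = 1" using B[of k k] True by (simp add: power2_eq_square)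
      have "?z3^2 + ?z4^2 = 1" using lagrange2[of n2 "V$k$3" n1 "V$k$4"] nn wk by (simp add: add.commute)
      moreover have "?z4^2 = 1" using z4 by simp
      ultimately have "?z3^2 = 0" by simp
      then have "?z3 = 0" by simp
      then show ?thesis using c2 e3 e4 z4 by simp
    next
      case False
      then have bk: "V$k$2 = m" using all by blast
      have ki0: "k \<noteq> i0" using bk i0 m by auto
      have j0i0: "j0 \<noteq> i0" using j0 i0 m by auto
      define v1 where "v1 = V$k$3 - V$j0$3"
      define v2 where "v2 = V$k$4 - V$j0$4"
      let ?z3 = "n2 * v1 - n1 * v2"
      let ?z4 = "n1 * v1 + n2 * v2"
      have e3: "linrow a b t (V$k) $ 3 = ?z3" using bk m
        by (simp add: linrow_def a_def b_def t_def v1_def v2_def) (simp add: field_simps)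
      have e4: "linrow a b t (V$k) $ 4 = ?z4" using bk m
        by (simp add: linrow_def a_def b_def t_def v1_def v2_def) (simp add: field_simps)
      have h1: "n1 * V$k$3 + n2 * V$k$4 - (V$i0$1 * m)/2 = -1"
        using B[of i0 k] ki0 i0 bk by (simp add: n1_def n2_def algebra_simps)
      have h2: "n1 * V$j0$3 + n2 * V$j0$4 - (V$i0$1 * m)/2 = -1"
        using B[of i0 j0] j0i0 i0 j0 by (simp add: n1_def n2_def algebra_simps)
      have z4: "?z4 = 0" using h1 h2 by (simp add: v1_def v2_def algebra_simps)
      have hk: "V$k$3 * V$k$3 + V$k$4 * V$k$4 - V$k$1 * m = 1" using B[of k k] bk by (simp add: mult.commute)
      have hj: "V$j0$3 * V$j0$3 + V$j0$4 * V$j0$4 - V$j0$1 * m = 1" using B[of j0 j0] j0 by (simp add: mult.commute)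
      have hkj: "V$k$3 * V$j0$3 + V$k$4 * V$j0$4 - (V$k$1 * m + m * V$j0$1)/2 = (if k = j0 then 1 else -1)"
        using B[of k j0] bk j0 by simp
      have vv: "v1^2 + v2^2 = 2 - 2 * (if k = j0 then 1 else -1)"
      proof -
        have "v1^2 + v2^2 = (V$k$3 * V$k$3 + V$k$4 * V$k$4 - V$k$1 * m)
             + (V$j0$3 * V$j0$3 + V$j0$4 * V$j0$4 - V$j0$1 * m)
             - 2 * (V$k$3 * V$j0$3 + V$k$4 * V$j0$4 - (V$k$1 * m + m * V$j0$1)/2)"
          by (simp add: v1_def v2_def power2_eq_square algebra_simps)
        then show ?thesis using hk hj hkj by simp
      qed
      have "?z3^2 + ?z4^2 = v1^2 + v2^2" using lagrange2[of n2 v1 n1 v2] nn by (simp add: add.commute)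
      then have "?z3^2 = 0 \<or> ?z3^2 = 4" using z4 vv by (cases "k = j0") simp_all
      then have "?z3 \<in> \<int>" by (rule sq_int)
      then show ?thesis using c2 e3 e4 z4 by simp
    qed
  qed
  then show ?thesis using ab by blast
qed

lemma W_cmove:
  assumes ab: "a^2 + b^2 = 1" and od: "oriented_descartes X"
  shows "W_coord (cmove a b t X) = (\<chi> i. linrow a b t (W_coord X $ i))"
proof -
  have "\<And>i. ocircle_wf (X$i)" using od by (simp add: oriented_descartes_def)
  then show ?thesis using aug_omove[OF ab] by (simp add: W_coord_def cmove_def)
qed

lemma linrow_commute:
  fixes g A :: "real^4^4"
  shows "g ** (\<chi> i. linrow a b t (A$i)) = (\<chi> i. linrow a b t ((g ** A)$i))"
  by (simp add: vec_eq_iff forall_4 matrix_matrix_mult_def sum_4 linrow_def algebra_simps)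

lemma cmove_inv:
  assumes ab: "a^2 + b^2 = 1"
  shows "cmove a (-b) (- rot a (-b) t) (cmove a b t X) = X"
proof -
  have "\<And>C. omove a (-b) (- rot a (-b) t) (omove a b t C) = C"
  proof -
    fix C show "omove a (-b) (- rot a (-b) t) (omove a b t C) = C"
    proof (cases C)
      case (ODisk c r) then show ?thesis using mvinv1[OF ab] by (simp add: mvinv_def)
    next
      case (OCoDisk c r) then show ?thesis using mvinv1[OF ab] by (simp add: mvinv_def)
    next
      case (OHalf n d)
      have "inner n (rot a (-b) t) = inner (rot a b n) t" by (rule inner_rot_adj)
      then show ?thesis using OHalf rot_inv1[OF ab] by (simp add: inner_minus_right)
    qed
  qed
  then show ?thesis by (simp add: cmove_def vec_eq_iff)
qed

lemma cmove_inv2: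
  assumes ab: "a^2 + b^2 = 1"
  shows "cmove a b t (cmove a (-b) (- rot a (-b) t) Y) = Y"
proof -
  have ab': "a^2 + (-b)^2 = 1" using ab by simp
  have "- rot a (- (-b)) (- rot a (-b) t) = t"
    using rot_inv2[OF ab] by (simp add: rot_minus)
  then show ?thesis using cmove_inv[OF ab', of "- rot a (-b) t" Y] by simp
qed

lemma orbit_fwd:
  assumes ab: "a^2 + b^2 = 1" and od: "oriented_descartes D" and X: "X \<in> sA_orbit D"
  shows "cmove a b t X \<in> sA_orbit (cmove a b t D)"
proof -
  obtain g where g: "g \<in> superApollonian" "W_coord X = g ** W_coord D" and odX: "oriented_descartes X"
    using X unfolding sA_orbit_def by blast
  have "W_coord (cmove a b t X) = (\<chi> i. linrow a b t (W_coord X $ i))" by (rule W_cmove[OF ab odX])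
  also have "\<dots> = (\<chi> i. linrow a b t ((g ** W_coord D) $ i))" using g(2) by simp
  also have "\<dots> = g ** (\<chi> i. linrow a b t (W_coord D $ i))" by (simp add: linrow_commute)
  also have "\<dots> = g ** W_coord (cmove a b t D)" using W_cmove[OF ab od] by simp
  finally have "W_coord (cmove a b t X) = g ** W_coord (cmove a b t D)" .
  then show ?thesis using g(1) od_cmove[OF ab odX] unfolding sA_orbit_def by blast
qed

lemma orbit_bwd:
  assumes ab: "a^2 + b^2 = 1" and od: "oriented_descartes D" and Y: "Y \<in> sA_orbit (cmove a b t D)"
  shows "\<exists>X \<in> sA_orbit D. Y = cmove a b t X"
proof -
  have ab': "a^2 + (-b)^2 = 1" using ab by simp
  let ?t' = "- rot a (-b) t"
  let ?X = "cmove a (-b) ?t' Y"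
  obtain g where g: "g \<in> superApollonian" "W_coord Y = g ** W_coord (cmove a b t D)"
    and odY: "oriented_descartes Y"
    using Y unfolding sA_orbit_def by blast
  have odD': "oriented_descartes (cmove a b t D)" using od_cmove[OF ab od] .
  have "W_coord ?X = (\<chi> i. linrow a (-b) ?t' (W_coord Y $ i))" by (rule W_cmove[OF ab' odY])
  also have "\<dots> = (\<chi> i. linrow a (-b) ?t' ((g ** W_coord (cmove a b t D)) $ i))" using g(2) by simp
  also have "\<dots> = g ** (\<chi> i. linrow a (-b) ?t' (W_coord (cmove a b t D) $ i))" by (simp add: linrow_commute)
  also have "\<dots> = g ** W_coord (cmove a (-b) ?t' (cmove a b t D))" using W_cmove[OF ab' odD'] by simp
  finally have "W_coord ?X = g ** W_coord (cmove a (-b) ?t' (cmove a b t D))" .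
  then have "W_coord ?X = g ** W_coord D" using cmove_inv[OF ab] by simp
  moreover have "oriented_descartes ?X" using od_cmove[OF ab' odY] .
  ultimately have "?X \<in> sA_orbit D" using g(1) unfolding sA_orbit_def by blast
  moreover have "Y = cmove a b t ?X" using cmove_inv2[OF ab] by simp
  ultimately show ?thesis by blast
qed

lemma super_packing_cmove:
  assumes ab: "a^2 + b^2 = 1" and od: "oriented_descartes D"
  shows "(\<lambda>C. mv a b t ` C) ` super_packing D = super_packing (cmove a b t D)"
proof
  show "(\<lambda>C. mv a b t ` C) ` super_packing D \<subseteq> super_packing (cmove a b t D)"
  proof
    fix S assume "S \<in> (\<lambda>C. mv a b t ` C) ` super_packing D"
    then obtain X i where X: "X \<in> sA_orbit D" and S: "S = mv a b t ` circ_set (X$i)"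
      unfolding super_packing_def by blast
    have "S = circ_set (cmove a b t X $ i)" using S circ_omove[OF ab] by (simp add: cmove_def)
    then show "S \<in> super_packing (cmove a b t D)"
      using orbit_fwd[OF ab od X] unfolding super_packing_def by blast
  qed
next
  show "super_packing (cmove a b t D) \<subseteq> (\<lambda>C. mv a b t ` C) ` super_packing D"
  proof
    fix S assume "S \<in> super_packing (cmove a b t D)"
    then obtain Y i where Y: "Y \<in> sA_orbit (cmove a b t D)" and S: "S = circ_set (Y$i)"
      unfolding super_packing_def by blast
    obtain X where X: "X \<in> sA_orbit D" and YX: "Y = cmove a b t X" using orbit_bwd[OF ab od Y] by blast
    have "S = mv a b t ` circ_set (X$i)" using S YX circ_omove[OF ab] by (simp add: cmove_def)
    moreover have "circ_set (X$i) \<in> super_packing D" using X unfolding super_packing_def by blast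
    ultimately show "S \<in> (\<lambda>C. mv a b t ` C) ` super_packing D" by blast
  qed
qed

lemma curv_W: "W_coord E $ i $ 2 = curv (E$i)"
  by (cases "E$i") (simp_all add: W_coord_def aug_simps)

lemma M_W: "M_coord X $ i $ 1 = W_coord X $ i $ 2" "M_coord X $ i $ 2 = W_coord X $ i $ 3"
  "M_coord X $ i $ 3 = W_coord X $ i $ 4"
  by (simp_all add: M_coord_def W_coord_def aug_simps)

theorem theorem4p3:
  assumes "oriented_descartes D"
    and "integral_super_packing D"
  shows "\<exists>f D'. euclidean_motion f \<and> oriented_descartes D' \<and>
           strongly_integral_super_packing D' \<and>
           (\<lambda>C. f ` C) ` super_packing D = super_packing D'"
proof -
  note od = assms(1)
  obtain E where E: "E \<in> sA_orbit D" and ci: "\<forall>i. curv (E$i) \<in> \<int>"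
    using assms(2) unfolding integral_super_packing_def by blast
  have odE: "oriented_descartes E" using E unfolding sA_orbit_def by blast
  have G: "GramRel (W_coord E)" using descartes_gram[OF odE] .
  have ic: "\<forall>i. W_coord E $ i $ 2 \<in> \<int>" using ci by (simp add: curv_W)
  obtain h where h: "good_h h" and st: "stuck_form (h ** W_coord E)"
    using descent[OF G ic] by blast
  obtain hi where hi: "intm hi" "hi ** h = mat 1" using h unfolding good_h_def by blast
  have G': "GramRel (h ** W_coord E)" using GramRel_mult[OF h G] .
  have ic': "\<forall>i. (h ** W_coord E) $ i $ 2 \<in> \<int>" using intcol_mult[OF _ ic] h by (simp add: good_h_def)
  obtain a b t where ab: "a^2 + b^2 = 1" and fr: "\<forall>k. linrow a b t ((h ** W_coord E)$k) $ 2 \<in> \<int> \<and>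
           linrow a b t ((h ** W_coord E)$k) $ 3 \<in> \<int> \<and> linrow a b t ((h ** W_coord E)$k) $ 4 \<in> \<int>"
    using frame[OF G' st ic'] by blast
  let ?Z = "h ** W_coord (cmove a b t E)"
  have Z: "?Z = (\<chi> k. linrow a b t ((h ** W_coord E)$k))"
    using W_cmove[OF ab odE] by (simp add: linrow_commute)
  have WZ: "W_coord (cmove a b t E) = hi ** ?Z"
    using hi(2) by (simp add: matrix_mul_assoc matrix_mul_lid)
  have Zi: "\<And>k j. j = 2 \<or> j = 3 \<or> j = 4 \<Longrightarrow> ?Z $ k $ j \<in> \<int>"
    using fr unfolding Z by auto
  have Wi: "\<And>k j. j = 2 \<or> j = 3 \<or> j = 4 \<Longrightarrow> W_coord (cmove a b t E) $ k $ j \<in> \<int>"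
  proof -
    fix k j :: 4 assume j: "j = 2 \<or> j = 3 \<or> j = 4"
    have "(hi ** ?Z) $ k $ j = (\<Sum>l\<in>UNIV. hi$k$l * ?Z$l$j)" by (simp add: matrix_matrix_mult_def)
    moreover have "(\<Sum>l\<in>UNIV. hi$k$l * ?Z$l$j) \<in> \<int>"
      using hi(1) Zi[OF j] unfolding intm_def by (intro Ints_sum Ints_mult) auto
    ultimately have "(hi ** ?Z) $ k $ j \<in> \<int>" by simp
    then show "W_coord (cmove a b t E) $ k $ j \<in> \<int>" using WZ by simp
  qed
  have Mi: "\<forall>i j. M_coord (cmove a b t E) $ i $ j \<in> \<int>"
  proof (intro allI)
    fix i and j :: 3
    show "M_coord (cmove a b t E) $ i $ j \<in> \<int>"
      using exhaust_3[of j] Wi[of 2 i] Wi[of 3 i] Wi[of 4 i] by (auto simp: M_W)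
  qed
  have "cmove a b t E \<in> sA_orbit (cmove a b t D)" using orbit_fwd[OF ab od E] .
  then have "strongly_integral_super_packing (cmove a b t D)"
    unfolding strongly_integral_super_packing_def using Mi by blast
  then show ?thesis
    using euclid_mv[OF ab] od_cmove[OF ab od] super_packing_cmove[OF ab od] by blast
qed

end
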